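(* Let $\Sigma$ be an infinite alphabet and $k\ge1$. Every RCP function $f\colon(\Sigma^* )^k\to\Sigma^*$ is of the form $$f(x_1,\ldots,x_k)=w_0\,x_{i_1}^{p_1}\,w_1\,x_{i_2}^{p_2}\,w_2\cdots x_{i_n}^{p_n}\,w_n\quad\text{for all }x_1,\ldots,x_k\in\Sigma^*,$$ for some $n\in\mathbb{N}$, words $w_0,\ldots,w_n\in\Sigma^*$, exponents $p_1,\ldots,p_n\in\mathbb{N}$ and indices $i_1,\ldots,i_n\in\{1,\ldots,k\}$.
   Context: $\Sigma^*$ is the free monoid over $\Sigma$ (finite words, concatenation, empty word $\varepsilon$); $x^p$ denotes the concatenation of $p$ copies of $x$. A function $f\colon(\Sigma^* )^k\to\Sigma^*$ is RCP if for every monoid morphism $\varphi\colon\Sigma^*\to\Sigma^*$ and all $u_1,\ldots,u_k,v_1,\ldots,v_k$ with $\varphi(u_i)=\varphi(v_i)$ for all $i$, we have $\varphi(f(u_1,\ldots,u_k))=\varphi(f(v_1,\ldots,v_k))$. *)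

theory Defs
  imports Main
begin

(* Words over the alphabet 'a are lists; a k-tuple of words is a list of length k. *)

definition monoid_morphism :: "('a list \<Rightarrow> 'b list) \<Rightarrow> bool" where
  "monoid_morphism \<phi> \<longleftrightarrow> \<phi> [] = [] \<and> (\<forall>u v. \<phi> (u @ v) = \<phi> u @ \<phi> v)"

definition RCP :: "nat \<Rightarrow> ('a list list \<Rightarrow> 'a list) \<Rightarrow> bool" where
  "RCP k f \<longleftrightarrow>
     (\<forall>\<phi> :: 'a list \<Rightarrow> 'a list. monoid_morphism \<phi> \<longrightarrow>
       (\<forall>us vs. length us = k \<longrightarrow> length vs = k \<longrightarrow>
          (\<forall>i<k. \<phi> (us ! i) = \<phi> (vs ! i)) \<longrightarrow> \<phi> (f us) = \<phi> (f vs)))"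

definition wpow :: "'a list \<Rightarrow> nat \<Rightarrow> 'a list" where
  "wpow x p = concat (replicate p x)"

end

theory Submission
  imports Defs
begin

definition idx :: "'a list \<Rightarrow> 'a \<Rightarrow> nat" where
  "idx ds a = (SOME m. m < length ds \<and> ds!m = a)"

lemma idx_in: "a \<in> set ds \<Longrightarrow> idx ds a < length ds \<and> ds!(idx ds a) = a"
  unfolding idx_def by (rule someI_ex) (simp add: in_set_conv_nth)

lemma idx_nth: "distinct ds \<Longrightarrow> m < length ds \<Longrightarrow> idx ds (ds!m) = m"
  using idx_in[of "ds!m" ds] nth_eq_iff_index_eq by fastforce

lemma morph: "monoid_morphism (\<lambda>w. concat (map h w))"
  by (simp add: monoid_morphism_def)

lemma RCP_app:
  fixes f :: "'a list list \<Rightarrow> 'a list" and h :: "'a \<Rightarrow> 'a list"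
  assumes "RCP k f" "length us = k" "length vs = k"
    "\<forall>i<k. concat (map h (us!i)) = concat (map h (vs!i))"
  shows "concat (map h (f us)) = concat (map h (f vs))"
proof -
  have "\<forall>\<phi> :: 'a list \<Rightarrow> 'a list. monoid_morphism \<phi> \<longrightarrow>
       (\<forall>us vs. length us = k \<longrightarrow> length vs = k \<longrightarrow>
          (\<forall>i<k. \<phi> (us ! i) = \<phi> (vs ! i)) \<longrightarrow> \<phi> (f us) = \<phi> (f vs))"
    using assms(1) unfolding RCP_def by blast
  from this[rule_format, OF morph[of h], of us vs] show ?thesis using assms by blast
qed

lemma sub_id: "(\<forall>a\<in>set w. h a = [a]) \<Longrightarrow> concat (map h w) = w"
  by (induct w) auto

lemma letters:
  assumes "RCP k f" "length xs = k" "b \<in> set (f xs)"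
  shows "b \<in> set (f (replicate k [])) \<or> (\<exists>i<k. b \<in> set (xs!i))"
proof (rule ccontr)
  assume c: "\<not> ?thesis"
  define h where "h = (\<lambda>a. if a = b then [b] else ([]::'a list))"
  have "\<forall>i<k. concat (map h (xs!i)) = concat (map h (replicate k [] ! i))"
    using c by (auto simp: h_def concat_eq_Nil_conv)
  hence "concat (map h (f xs)) = concat (map h (f (replicate k [])))"
    using RCP_app[OF assms(1) assms(2), of "replicate k []" h] by simp
  also have "\<dots> = []" using c by (auto simp: h_def concat_eq_Nil_conv)
  finally show False using assms(3) by (auto simp: h_def concat_eq_Nil_conv)
qed

lemma fresh:
  assumes "infinite (UNIV :: 'a set)" "finite (F :: 'a set)"
  shows "\<exists>cs. length cs = k \<and> distinct cs \<and> set cs \<inter> F = {}"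
proof -
  have "infinite (UNIV - F)" using assms by simp
  then obtain B where "B \<subseteq> UNIV - F" "finite B" "card B = k"
    using infinite_arbitrarily_large by blast
  moreover obtain cs where "set cs = B" "distinct cs" using `finite B` finite_distinct_list by blast
  ultimately show ?thesis using distinct_card by fastforce
qed

theorem mainTheorem20:
  fixes f :: "'a list list \<Rightarrow> 'a list" and k :: nat
  assumes "infinite (UNIV :: 'a set)"
    and "k \<ge> 1"
    and "RCP k f"
  shows "\<exists>(n::nat) (w :: nat \<Rightarrow> 'a list) (p :: nat \<Rightarrow> nat) (i :: nat \<Rightarrow> nat).
           (\<forall>j\<in>{1..n}. i j \<in> {1..k}) \<and>
           (\<forall>xs. length xs = k \<longrightarrow>
              f xs = w 0 @ concat (map (\<lambda>j. wpow (xs ! (i j - 1)) (p j) @ w j) [1..<n+1]))"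
proof -
  define C where "C = set (f (replicate k []))"
  obtain cs :: "'a list" where cs: "length cs = k" "distinct cs" "set cs \<inter> C = {}"
    using fresh[OF assms(1), of C] by (auto simp: C_def)
  define us where "us = map (\<lambda>c. [c]) cs"
  define t where "t = f us"
  have tl: "set t \<subseteq> C \<union> set cs"
  proof
    fix b assume "b \<in> set t"
    then have "b \<in> C \<or> (\<exists>i<k. b \<in> set (us!i))"
      using letters[OF assms(3), of us b] cs by (auto simp: t_def us_def C_def)
    then show "b \<in> C \<union> set cs" using cs by (auto simp: us_def)
  qed
  define G where "G = (\<lambda>(xs::'a list list) a. if a \<in> set cs then xs!(idx cs a) else [a])"
  have key: "f xs = concat (map (G xs) t)" if xl: "length xs = k" for xs
  proof -
    define F where "F = C \<union> set cs \<union> (\<Union>i<k. set (xs!i))"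
    have "finite F" by (simp add: F_def C_def)
    then obtain ds :: "'a list" where ds: "length ds = k" "distinct ds" "set ds \<inter> F = {}"
      using fresh[OF assms(1)] by blast
    define vs where "vs = map (\<lambda>c. [c]) ds"
    define h1 where "h1 = (\<lambda>a. if a \<in> set cs then [ds!(idx cs a)] else [a])"
    have "\<forall>i<k. concat (map h1 (us!i)) = concat (map h1 (vs!i))"
    proof (intro allI impI)
      fix i assume "i < k"
      then have "ds!i \<notin> set cs" using ds cs nth_mem[of i ds] unfolding F_def by blast
      then show "concat (map h1 (us!i)) = concat (map h1 (vs!i))"
        using `i<k` cs ds by (simp add: us_def vs_def h1_def idx_nth)
    qed
    hence e1: "concat (map h1 t) = concat (map h1 (f vs))"
      using RCP_app[OF assms(3), of us vs h1] cs ds by (simp add: us_def vs_def t_def)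
    have "set (f vs) \<subseteq> C \<union> set ds"
    proof
      fix b assume "b \<in> set (f vs)"
      then have "b \<in> C \<or> (\<exists>i<k. b \<in> set (vs!i))"
        using letters[OF assms(3), of vs b] ds by (auto simp: vs_def C_def)
      then show "b \<in> C \<union> set ds" using ds by (auto simp: vs_def)
    qed
    moreover have "set ds \<inter> set cs = {}" using ds by (auto simp: F_def)
    ultimately have "concat (map h1 (f vs)) = f vs"
      using cs by (intro sub_id) (auto simp: h1_def)
    with e1 have fv: "f vs = concat (map h1 t)" by simp
    define h2 where "h2 = (\<lambda>a. if a \<in> set ds then xs!(idx ds a) else [a])"
    have xsd: "\<forall>i<k. set (xs!i) \<inter> set ds = {}" using ds by (auto simp: F_def)
    have "\<forall>i<k. concat (map h2 (vs!i)) = concat (map h2 (xs!i))"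
    proof (intro allI impI)
      fix i assume "i < k"
      have "concat (map h2 (xs!i)) = xs!i"
        using xsd `i<k` by (intro sub_id) (auto simp: h2_def)
      then show "concat (map h2 (vs!i)) = concat (map h2 (xs!i))"
        using `i<k` ds by (simp add: vs_def h2_def idx_nth)
    qed
    hence e2: "concat (map h2 (f vs)) = concat (map h2 (f xs))"
      using RCP_app[OF assms(3), of vs xs h2] ds xl by (simp add: vs_def)
    have "set (f xs) \<subseteq> C \<union> (\<Union>i<k. set (xs!i))"
      using letters[OF assms(3) xl] by (auto simp: C_def)
    hence "concat (map h2 (f xs)) = f xs"
      using ds by (intro sub_id) (auto simp: h2_def F_def)
    with e2 fv have "f xs = concat (map h2 (concat (map h1 t)))" by simp
    also have "\<dots> = concat (map (\<lambda>a. concat (map h2 (h1 a))) t)"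
      by (induct t) auto
    also have "\<dots> = concat (map (G xs) t)"
    proof (rule arg_cong[where f=concat], rule map_cong[OF refl])
      fix a assume a: "a \<in> set t"
      show "concat (map h2 (h1 a)) = G xs a"
      proof (cases "a \<in> set cs")
        case True
        then have "idx cs a < k" using idx_in[OF True] cs by simp
        then show ?thesis using True ds by (simp add: h1_def h2_def G_def idx_nth)
      next
        case False
        then have "a \<in> C" using tl a by auto
        then have "a \<notin> set ds" using ds by (auto simp: F_def)
        then show ?thesis using False by (simp add: h1_def h2_def G_def)
      qed
    qed
    finally show ?thesis .
  qed
  define n where "n = length t"
  define w where "w = (\<lambda>j. if j = 0 then [] else (if t!(j-1) \<in> set cs then [] else [t!(j-1)]))"
  define p where "p = (\<lambda>j. if t!(j-1) \<in> set cs then 1 else (0::nat))"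
  define i where "i = (\<lambda>j. if t!(j-1) \<in> set cs then idx cs (t!(j-1)) + 1 else 1)"
  have "\<forall>j\<in>{1..n}. i j \<in> {1..k}"
  proof (intro ballI)
    fix j assume "j \<in> {1..n}"
    show "i j \<in> {1..k}"
    proof (cases "t!(j-1) \<in> set cs")
      case True
      then have "idx cs (t!(j-1)) < k" using idx_in[OF True] cs by simp
      then show ?thesis using True by (simp add: i_def)
    qed (use assms(2) in \<open>simp add: i_def\<close>)
  qed
  moreover have "\<forall>xs. length xs = k \<longrightarrow>
              f xs = w 0 @ concat (map (\<lambda>j. wpow (xs ! (i j - 1)) (p j) @ w j) [1..<n+1])"
  proof (intro allI impI)
    fix xs :: "'a list list" assume xl: "length xs = k"
    have "map (\<lambda>j. wpow (xs ! (i j - 1)) (p j) @ w j) [1..<n+1]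
        = map (\<lambda>j. G xs (t!(j-1))) [1..<n+1]"
    proof (rule map_cong[OF refl])
      fix j assume "j \<in> set [1..<n+1]"
      then have "j \<noteq> 0" by auto
      then show "wpow (xs ! (i j - 1)) (p j) @ w j = G xs (t!(j-1))"
        by (cases "t!(j-1) \<in> set cs") (simp_all add: wpow_def w_def p_def i_def G_def)
    qed
    also have "\<dots> = map (\<lambda>j. G xs (t!(j-1))) (map Suc [0..<n])"
      by (simp add: map_Suc_upt)
    also have "\<dots> = map (G xs) t"
      by (simp only: map_map comp_def diff_Suc_1 n_def) (rule nth_equalityI, auto)
    finally show "f xs = w 0 @ concat (map (\<lambda>j. wpow (xs ! (i j - 1)) (p j) @ w j) [1..<n+1])"
      using key[OF xl] by (simp add: w_def)
  qed
  ultimately show ?thesis by blast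
qed

end
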